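(* For every $m\ge1$ and every probability mass function $(g_k)_{k\in\mathbb Z}$ of a sum of $m$ independent Bernoulli random variables (extended by $0$ outside $\{0,\ldots,m\}$), the following hold for all $k\in\mathbb Z$: $$g_k^2g_{k+1}-2g_{k+1}^2g_{k-1}+g_{k+2}g_kg_{k-1}\ge0,$$ $$g_k^3-g_{k-1}g_kg_{k+1}-g_{k-1}^2g_{k+2}+g_{k-2}g_kg_{k+2}\ge0,$$ $$g_k^3-g_{k-1}g_kg_{k+1}-g_{k+1}^2g_{k-2}+g_{k-2}g_kg_{k+2}\ge0,$$ $$2g_k^3-3g_{k-1}g_kg_{k+1}+g_{k-1}^2g_{k+2}\ge0,$$ $$2g_k^3-3g_{k-1}g_kg_{k+1}+g_{k+1}^2g_{k-2}\ge0,$$ $$2g_k^2g_{k-2}-3g_{k-2}g_{k-1}g_{k+1}+g_{k+1}g_kg_{k-3}\ge0.$$ *)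

theory Defs
  imports "HOL-Probability.Probability"
begin

fun bernoulli_sum_pmf :: "real list \<Rightarrow> int pmf" where
  "bernoulli_sum_pmf [] = return_pmf 0"
| "bernoulli_sum_pmf (p # ps) =
     map_pmf (\<lambda>(b, s). (if b then 1 else 0) + s)
       (pair_pmf (bernoulli_pmf p) (bernoulli_sum_pmf ps))"

end

theory Submission
  imports Defs
begin

definition GG :: "real \<Rightarrow> real \<Rightarrow> real \<Rightarrow> real" where
  "GG x P Q = P * (x + Q) / (x + P)"

lemma L1:
  fixes p0 p1 p2 p3 x :: real
  assumes x: "x > 0" and h3: "0 \<le> p3" "p3 \<le> p2" and c1: "0 \<le> p1 - 2*p2 + p3" and c0: "0 \<le> p0 - 2*p1 + p2"
  shows "0 \<le> GG x p0 p1 - 2 * GG x p1 p2 + GG x p2 p3"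
proof -
  define s where "s = p3"
  define d where "d = p2 - p3"
  define e2 where "e2 = p1 - 2*p2 + p3"
  define e1 where "e1 = p0 - 2*p1 + p2"
  have s0: "s \<ge> 0" and d0: "d \<ge> 0" and e20: "e2 \<ge> 0" and e10: "e1 \<ge> 0"
    using assms by (auto simp: s_def d_def e2_def e1_def)
  have P3: "p3 = s" and P2: "p2 = s + d" and P1: "p1 = s + 2*d + e2" and P0: "p0 = s + 3*d + 2*e2 + e1"
    by (auto simp: s_def d_def e2_def e1_def)
  have D: "x + p0 > 0" "x + p1 > 0" "x + p2 > 0" using s0 d0 e20 e10 x P0 P1 P2 by auto
  have eq: "GG x p0 p1 - 2 * GG x p1 p2 + GG x p2 p3 =
     (p0*(x+p1)*(x+p1)*(x+p2) - 2*(p1*(x+p2)*(x+p0)*(x+p2)) + p2*(x+p3)*(x+p0)*(x+p1)) / ((x+p0)*(x+p1)*(x+p2))"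
    using D unfolding GG_def by (simp add: divide_simps) (simp add: algebra_simps)
  have num: "p0*(x+p1)*(x+p1)*(x+p2) - 2*(p1*(x+p2)*(x+p0)*(x+p2)) + p2*(x+p3)*(x+p0)*(x+p1) =
    2*e2^3*x + e1*x^3 + e1*e2^2*x + d*e2*x^2 + 9*d*e2^2*x + 2*d*e2^3 + 2*d*e1*x^2 + 3*d*e1*e2*x + d*e1*e2^2 + 11*d^2*e2*x + 7*d^2*e2^2 + 2*d^2*e1*x + 2*d^2*e1*e2 + 2*d^3*x + 6*d^3*e2 + s*e2*x^2 + 3* s*e2^2*x + 2* s*e2^3 + 2* s*e1*x^2 + s*e1*e2*x + s*e1*e2^2 + 7* s*d*e2*x + 10* s*d*e2^2 + 2* s*d*e1*x + 3* s*d*e1*e2 + 11* s*d^2*e2 + 2* s^2*e2*x + 3* s^2*e2^2 + s^2*e1*x + s^2*e1*e2 + 6* s^2*d*e2 + s^3*e2"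
    unfolding P0 P1 P2 P3 by (simp add: algebra_simps power2_eq_square power3_eq_cube)
  have "0 \<le> 2*e2^3*x + e1*x^3 + e1*e2^2*x + d*e2*x^2 + 9*d*e2^2*x + 2*d*e2^3 + 2*d*e1*x^2 + 3*d*e1*e2*x + d*e1*e2^2 + 11*d^2*e2*x + 7*d^2*e2^2 + 2*d^2*e1*x + 2*d^2*e1*e2 + 2*d^3*x + 6*d^3*e2 + s*e2*x^2 + 3* s*e2^2*x + 2* s*e2^3 + 2* s*e1*x^2 + s*e1*e2*x + s*e1*e2^2 + 7* s*d*e2*x + 10* s*d*e2^2 + 2* s*d*e1*x + 3* s*d*e1*e2 + 11* s*d^2*e2 + 2* s^2*e2*x + 3* s^2*e2^2 + s^2*e1*x + s^2*e1*e2 + 6* s^2*d*e2 + s^3*e2"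
    using s0 d0 e20 e10 x by (intro add_nonneg_nonneg mult_nonneg_nonneg zero_le_power) simp_all
  then show ?thesis unfolding eq num using D by simp
qed

lemma L2:
  fixes p1 p2 p3 x :: real
  assumes x: "x > 0" and h3: "0 \<le> p3" "p3 \<le> p2" and c1: "0 \<le> p1 - 2*p2 + p3"
  shows "0 \<le> (x + p1) - 2 * GG x p1 p2 + GG x p2 p3"
proof -
  define s where "s = p3"
  define d where "d = p2 - p3"
  define e2 where "e2 = p1 - 2*p2 + p3"
  have s0: "s \<ge> 0" and d0: "d \<ge> 0" and e20: "e2 \<ge> 0"
    using assms by (auto simp: s_def d_def e2_def)
  have P3: "p3 = s" and P2: "p2 = s + d" and P1: "p1 = s + 2*d + e2"
    by (auto simp: s_def d_def e2_def)
  have D: "x + p1 > 0" "x + p2 > 0" using s0 d0 e20 x P1 P2 by auto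
  have eq: "(x + p1) - 2 * GG x p1 p2 + GG x p2 p3 =
     ((x+p1)*(x+p1)*(x+p2) - 2*(p1*(x+p2)*(x+p2)) + p2*(x+p3)*(x+p1)) / ((x+p1)*(x+p2))"
    using D unfolding GG_def by (simp add: divide_simps) (simp add: algebra_simps)
  have num: "(x+p1)*(x+p1)*(x+p2) - 2*(p1*(x+p2)*(x+p2)) + p2*(x+p3)*(x+p1) =
    x^3 + e2^2*x + 2*d*x^2 + 3*d*e2*x + d*e2^2 + 2*d^2*x + 2*d^2*e2 + 2* s*x^2 + s*e2*x + s*e2^2 + 2* s*d*x + 3* s*d*e2 + s^2*x + s^2*e2"
    unfolding P1 P2 P3 by (simp add: algebra_simps power2_eq_square power3_eq_cube)
  have "0 \<le> x^3 + e2^2*x + 2*d*x^2 + 3*d*e2*x + d*e2^2 + 2*d^2*x + 2*d^2*e2 + 2* s*x^2 + s*e2*x + s*e2^2 + 2* s*d*x + 3* s*d*e2 + s^2*x + s^2*e2"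
    using s0 d0 e20 x by (intro add_nonneg_nonneg mult_nonneg_nonneg zero_le_power) simp_all
  then show ?thesis unfolding eq num using D by simp
qed

lemma GG_mono:
  fixes x P Q P' Q' :: real
  assumes "x > 0" "0 \<le> P'" "P' \<le> P" "0 \<le> Q'" "Q' \<le> Q"
  shows "GG x P' Q' \<le> GG x P Q"
proof -
  have "GG x P' Q' \<le> GG x P' Q" using assms unfolding GG_def
    by (intro divide_right_mono mult_left_mono) auto
  also have "\<dots> \<le> GG x P Q"
  proof -
    have px: "P' * x \<le> P * x" using assms by (intro mult_right_mono) auto
    have "P' * (x + P) \<le> P * (x + P')" using px by (simp add: algebra_simps)
    then have "P' / (x + P') \<le> P / (x + P)" using assms by (simp add: divide_simps)
    then have "P' / (x + P') * (x + Q) \<le> P / (x + P) * (x + Q)"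
      using assms by (intro mult_right_mono) auto
    then show ?thesis unfolding GG_def by simp
  qed
  finally show ?thesis .
qed
definition rat :: "(int \<Rightarrow> real) \<Rightarrow> int \<Rightarrow> real" where
  "rat g j = g j / g (j - 1)"

definition Inv :: "(int \<Rightarrow> real) \<Rightarrow> int \<Rightarrow> nat \<Rightarrow> bool" where
  "Inv g s n \<longleftrightarrow> (\<forall>j. 0 \<le> g j) \<and> (\<forall>j. 0 < g j \<longleftrightarrow> s \<le> j \<and> j \<le> s + int n) \<and>
     (\<forall>j\<ge>s+1. rat g (j+1) \<le> rat g j) \<and>
     (\<forall>j\<ge>s+1. 0 \<le> rat g j - 2 * rat g (j+1) + rat g (j+2))"

lemma rat_nonneg: "(\<forall>j. 0 \<le> g j) \<Longrightarrow> 0 \<le> rat g j"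
  unfolding rat_def by simp

lemma GG_zero: "GG x 0 Q = 0" unfolding GG_def by simp

lemma GG_le: assumes "x > 0" "0 \<le> Q" "Q \<le> P" shows "GG x P Q \<le> x + P"
proof -
  have "GG x P Q \<le> GG x P P" using assms by (intro GG_mono) auto
  also have "GG x P P = P" using assms unfolding GG_def by simp
  finally show ?thesis using assms by simp
qed

lemma Inv_step:
  assumes I: "Inv g s n" and x: "x > 0"
  shows "Inv (\<lambda>j. g j + x * g (j - 1)) s (Suc n)"
proof -
  define h where "h = (\<lambda>j. g j + x * g (j - 1))"
  have g0: "\<And>j. 0 \<le> g j" and gp: "\<And>j. 0 < g j \<longleftrightarrow> s \<le> j \<and> j \<le> s + int n"
    and mo: "\<And>j. j \<ge> s+1 \<Longrightarrow> rat g (j+1) \<le> rat g j"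
    and cv: "\<And>j. j \<ge> s+1 \<Longrightarrow> 0 \<le> rat g j - 2 * rat g (j+1) + rat g (j+2)"
    using I unfolding Inv_def by auto
  have gz: "\<And>j. \<not> (s \<le> j \<and> j \<le> s + int n) \<Longrightarrow> g j = 0"
  proof -
    fix j assume "\<not> (s \<le> j \<and> j \<le> s + int n)"
    then have "\<not> 0 < g j" using gp by blast
    then show "g j = 0" using g0[of j] by linarith
  qed
  have r0: "\<And>j. 0 \<le> rat g j" using g0 by (simp add: rat_nonneg)
  have h0: "\<And>j. 0 \<le> h j" unfolding h_def using g0 x by (simp add: add_nonneg_nonneg)
  have hp: "\<And>j. 0 < h j \<longleftrightarrow> s \<le> j \<and> j \<le> s + int (Suc n)"
  proof -
    fix j
    have "0 < h j \<longleftrightarrow> 0 < g j \<or> 0 < g (j - 1)"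
    proof
      assume hj: "0 < h j"
      show "0 < g j \<or> 0 < g (j - 1)"
      proof (rule ccontr)
        assume "\<not> (0 < g j \<or> 0 < g (j - 1))"
        then have "g j = 0" "g (j - 1) = 0" using g0[of j] g0[of "j-1"] by auto
        then show False using hj unfolding h_def by simp
      qed
    next
      assume "0 < g j \<or> 0 < g (j - 1)"
      then show "0 < h j" unfolding h_def using g0[of j] g0[of "j-1"] x
        by (auto intro: add_pos_nonneg add_nonneg_pos mult_pos_pos)
    qed
    also have "\<dots> \<longleftrightarrow> s \<le> j \<and> j \<le> s + int (Suc n)" using gp[of j] gp[of "j-1"] by auto
    finally show "0 < h j \<longleftrightarrow> s \<le> j \<and> j \<le> s + int (Suc n)" .
  qed
  have rs1: "rat h (s+1) = x + rat g (s+1)"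
  proof -
    have "g (s - 1) = 0" using gz by auto
    moreover have "g s > 0" using gp by auto
    ultimately show ?thesis unfolding rat_def h_def by (simp add: field_simps)
  qed
  have rG: "rat h j = GG x (rat g (j-1)) (rat g j)" if j: "j \<ge> s + 2" for j
  proof (cases "g (j-2) > 0")
    case True
    show ?thesis
    proof (cases "g (j-1) > 0")
      case True2: True
      have "g (j - 1) / g (j - 2) * (x + g j / g (j - 1)) / (x + g (j - 1) / g (j - 2))
          = (g j + x * g (j - 1)) / (g (j - 1) + x * g (j - 2))"
        using True True2 x by (simp add: divide_simps) (simp add: algebra_simps)
      then show ?thesis unfolding rat_def h_def GG_def by (simp add: algebra_simps)
    next
      case False
      then have a: "g (j-1) = 0" using g0[of "j-1"] by simp
      have "g j = 0" using gp[of "j-1"] gp[of "j-2"] True False j gz[of j] by auto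
      then show ?thesis unfolding rat_def h_def GG_def using a by simp
    qed
  next
    case False
    then have "j - 2 > s + int n" using gp[of "j-2"] j by auto
    then have "g (j-2) = 0" "g (j-1) = 0" "g j = 0" using gz by auto
    then show ?thesis unfolding rat_def h_def GG_def by simp
  qed
  have moh: "rat h (j+1) \<le> rat h j" if j: "j \<ge> s+1" for j
  proof (cases "j = s + 1")
    case True
    have "rat h (j+1) = GG x (rat g (s+1)) (rat g (s+2))" using rG[of "j+1"] True by (simp add: ac_simps)
    also have "\<dots> \<le> x + rat g (s+1)" using x r0 mo[of "s+1"] by (intro GG_le) (auto simp: add.commute)
    finally show ?thesis using rs1 True by simp
  next
    case False
    then have j2: "j \<ge> s + 2" using j by simp
    have "rat h (j+1) = GG x (rat g j) (rat g (j+1))" using rG[of "j+1"] j2 by (simp add: ac_simps)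
    also have "\<dots> \<le> GG x (rat g (j-1)) (rat g j)"
      using x r0 mo[of "j-1"] mo[of j] j2 by (intro GG_mono) auto
    finally show ?thesis using rG[OF j2] by simp
  qed
  have cvh: "0 \<le> rat h j - 2 * rat h (j+1) + rat h (j+2)" if j: "j \<ge> s+1" for j
  proof (cases "j = s + 1")
    case True
    have e1: "rat h (j+1) = GG x (rat g (s+1)) (rat g (s+2))" using rG[of "j+1"] True by (simp add: ac_simps)
    have e2: "rat h (j+2) = GG x (rat g (s+2)) (rat g (s+3))" using rG[of "j+2"] True by (simp add: ac_simps)
    have "0 \<le> (x + rat g (s+1)) - 2 * GG x (rat g (s+1)) (rat g (s+2)) + GG x (rat g (s+2)) (rat g (s+3))"
      using x r0[of "s+3"] mo[of "s+2"] cv[of "s+1"] by (intro L2) (auto simp: add.assoc)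
    then show ?thesis using e1 e2 rs1 True by simp
  next
    case False
    then have j2: "j \<ge> s + 2" using j by simp
    have e0: "rat h j = GG x (rat g (j-1)) (rat g j)" using rG[OF j2] .
    have e1: "rat h (j+1) = GG x (rat g j) (rat g (j+1))" using rG[of "j+1"] j2 by (simp add: ac_simps)
    have e2: "rat h (j+2) = GG x (rat g (j+1)) (rat g (j+2))" using rG[of "j+2"] j2 by (simp add: ac_simps)
    have c1: "0 \<le> rat g (j-1) - 2 * rat g j + rat g (j+1)" using cv[of "j-1"] j2 by (simp add: ac_simps)
    have "0 \<le> GG x (rat g (j-1)) (rat g j) - 2 * GG x (rat g j) (rat g (j+1)) + GG x (rat g (j+1)) (rat g (j+2))"
      using x r0[of "j+2"] mo[of "j+1"] cv[of j] c1 j2 by (intro L1) (auto simp: add.assoc)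
    then show ?thesis using e0 e1 e2 by simp
  qed
  show ?thesis unfolding Inv_def h_def[symmetric] using h0 hp moh cvh by blast
qed

lemma Inv_scale:
  assumes I: "Inv g s n" and c: "c > 0"
  shows "Inv (\<lambda>j. c * g j) s n"
proof -
  have r: "rat (\<lambda>j. c * g j) j = rat g j" for j
    unfolding rat_def using c by simp
  show ?thesis using I c unfolding Inv_def r by (simp add: zero_less_mult_iff)
qed

lemma Inv_shift:
  assumes I: "Inv g s n"
  shows "Inv (\<lambda>j. g (j + c)) (s - c) n"
proof -
  have r: "rat (\<lambda>j. g (j + c)) j = rat g (j + c)" for j
    unfolding rat_def by (simp add: algebra_simps)
  have g0: "\<And>j. 0 \<le> g j" and gp: "\<And>j. 0 < g j \<longleftrightarrow> s \<le> j \<and> j \<le> s + int n"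
    and mo: "\<And>j. j \<ge> s+1 \<Longrightarrow> rat g (j+1) \<le> rat g j"
    and cv: "\<And>j. j \<ge> s+1 \<Longrightarrow> 0 \<le> rat g j - 2 * rat g (j+1) + rat g (j+2)"
    using I unfolding Inv_def by auto
  have "rat g (j + c + 1) \<le> rat g (j + c)" if "j \<ge> s - c + 1" for j
    using mo[of "j+c"] that by simp
  moreover have "0 \<le> rat g (j + c) - 2 * rat g (j + c + 1) + rat g (j + c + 2)" if "j \<ge> s - c + 1" for j
    using cv[of "j+c"] that by (simp add: ac_simps)
  moreover have "0 < g (j + c) \<longleftrightarrow> s - c \<le> j \<and> j \<le> s - c + int n" for j
    using gp[of "j+c"] by auto
  ultimately show ?thesis unfolding Inv_def r using g0 by (simp add: ac_simps)
qed

lemma C1_of_Inv: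
  assumes I: "Inv g s n"
  shows "0 \<le> (g k)^2 * g (k+1) - 2 * (g (k+1))^2 * g (k-1) + g (k+2) * g k * g (k-1)"
proof -
  have g0: "\<And>j. 0 \<le> g j" and gp: "\<And>j. 0 < g j \<longleftrightarrow> s \<le> j \<and> j \<le> s + int n"
    and cv: "\<And>j. j \<ge> s+1 \<Longrightarrow> 0 \<le> rat g j - 2 * rat g (j+1) + rat g (j+2)"
    using I unfolding Inv_def by auto
  show ?thesis
  proof (cases "g (k-1) = 0")
    case True
    then show ?thesis using g0 by simp
  next
    case F1: False
    then have a: "g (k-1) > 0" using g0[of "k-1"] by simp
    show ?thesis
    proof (cases "g (k+1) = 0")
      case True
      have "\<not> 0 < g (k+1)" using True by simp
      then have "g (k+2) = 0" using gp[of "k+1"] gp[of "k-1"] a gp[of "k+2"] g0[of "k+2"] by auto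
      then show ?thesis using True by simp
    next
      case False
      then have c: "g (k+1) > 0" using g0[of "k+1"] by simp
      have b: "g k > 0" using gp[of "k+1"] gp[of "k-1"] a c gp[of k] by auto
      have ks: "k \<ge> s + 1" using gp[of "k-1"] a by auto
      have "0 \<le> g k / g (k-1) - 2 * (g (k+1) / g k) + g (k+2) / g (k+1)"
        using cv[OF ks] unfolding rat_def by (simp add: ac_simps)
      then have "0 \<le> (g (k-1) * g k * g (k+1)) * (g k / g (k-1) - 2 * (g (k+1) / g k) + g (k+2) / g (k+1))"
        using a b c by simp
      also have "\<dots> = (g k)^2 * g (k+1) - 2 * (g (k+1))^2 * g (k-1) + g (k+2) * g k * g (k-1)"
        using a b c by (simp add: field_simps power2_eq_square)
      finally show ?thesis .
    qed
  qed
qed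

lemma LC_of_Inv:
  assumes I: "Inv g s n"
  shows "g (k-1) * g (k+1) \<le> (g k)^2"
proof -
  have g0: "\<And>j. 0 \<le> g j" and gp: "\<And>j. 0 < g j \<longleftrightarrow> s \<le> j \<and> j \<le> s + int n"
    and mo: "\<And>j. j \<ge> s+1 \<Longrightarrow> rat g (j+1) \<le> rat g j"
    using I unfolding Inv_def by auto
  show ?thesis
  proof (cases "g (k-1) = 0 \<or> g (k+1) = 0")
    case True
    then show ?thesis by auto
  next
    case False
    then have a: "g (k-1) > 0" and c: "g (k+1) > 0" using g0[of "k-1"] g0[of "k+1"] by auto
    have b: "g k > 0" using gp[of "k+1"] gp[of "k-1"] a c gp[of k] by auto
    have ks: "k \<ge> s + 1" using gp[of "k-1"] a by auto
    have "g (k+1) / g k \<le> g k / g (k-1)" using mo[OF ks] unfolding rat_def by simp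
    then show ?thesis using a b by (simp add: divide_simps power2_eq_square mult.commute)
  qed
qed

lemma six:
  fixes a b c d z y :: real
  assumes nn: "0 \<le> a" "0 \<le> b" "0 \<le> c" "0 \<le> d" "0 \<le> z" "0 \<le> y"
    and C1: "0 \<le> b^2*c - 2*c^2*a + d*b*a"
    and C2: "0 \<le> b^2*a - 2*a^2*c + z*b*c"
    and C2m: "0 \<le> a^2*z - 2*z^2*b + y*a*b"
    and LC0: "a*c \<le> b^2" and LCm: "z*b \<le> a^2" and LCp: "b*d \<le> c^2"
    and zr: "b = 0 \<Longrightarrow> a*d = 0 \<and> c*z = 0"
  shows "(b^2 * c - 2 * c^2 * a + d * b * a \<ge> 0) \<and>
    (b^3 - a * b * c - a^2 * d + z * b * d \<ge> 0) \<and>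
    (b^3 - a * b * c - c^2 * z + z * b * d \<ge> 0) \<and>
    (2 * b^3 - 3 * a * b * c + a^2 * d \<ge> 0) \<and>
    (2 * b^3 - 3 * a * b * c + c^2 * z \<ge> 0) \<and>
    (2 * b^2 * z - 3 * z * a * c + c * b * y \<ge> 0)"
proof -
  have pos: "\<And>X. 0 < b \<Longrightarrow> 0 \<le> b * X \<Longrightarrow> 0 \<le> X" by (simp add: zero_le_mult_iff)
  have i2: "0 \<le> b^3 - a * b * c - a^2 * d + z * b * d"
  proof (cases "b = 0")
    case True then show ?thesis using zr by (auto simp: power2_eq_square)
  next
    case False
    then have bp: "b > 0" using nn by simp
    have "b * (b^3 - a * b * c - a^2 * d + z * b * d) = (a^2 - z*b)*(c^2 - b*d) + c*(b^2*a - 2*a^2*c + z*b*c) + (b^2 - a*c)^2"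
      by (simp add: algebra_simps power2_eq_square power3_eq_cube)
    also have "\<dots> \<ge> 0" using mult_nonneg_nonneg[of "a^2 - z*b" "c^2 - b*d"] mult_nonneg_nonneg[OF nn(3) C2] zero_le_power2[of "b^2 - a*c"] LCm LCp by linarith
    finally show ?thesis using pos[OF bp] by blast
  qed
  have i3: "0 \<le> b^3 - a * b * c - c^2 * z + z * b * d"
  proof (cases "b = 0")
    case True then show ?thesis using zr by (auto simp: power2_eq_square)
  next
    case False
    then have bp: "b > 0" using nn by simp
    have "b * (b^3 - a * b * c - c^2 * z + z * b * d) = (a^2 - z*b)*(c^2 - b*d) + a*(b^2*c - 2*c^2*a + d*b*a) + (b^2 - a*c)^2"
      by (simp add: algebra_simps power2_eq_square power3_eq_cube)
    also have "\<dots> \<ge> 0" using mult_nonneg_nonneg[of "a^2 - z*b" "c^2 - b*d"] mult_nonneg_nonneg[OF nn(1) C1] zero_le_power2[of "b^2 - a*c"] LCm LCp by linarith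
    finally show ?thesis using pos[OF bp] by blast
  qed
  have i4: "0 \<le> 2 * b^3 - 3 * a * b * c + a^2 * d"
  proof (cases "b = 0")
    case True then show ?thesis using nn by simp
  next
    case False
    then have bp: "b > 0" using nn by simp
    have "b * (2 * b^3 - 3 * a * b * c + a^2 * d) = a*(b^2*c - 2*c^2*a + d*b*a) + 2*(b^2 - a*c)^2"
      by (simp add: algebra_simps power2_eq_square power3_eq_cube)
    also have "\<dots> \<ge> 0" using mult_nonneg_nonneg[OF nn(1) C1] zero_le_power2[of "b^2 - a*c"] by linarith
    finally show ?thesis using pos[OF bp] by blast
  qed
  have i5: "0 \<le> 2 * b^3 - 3 * a * b * c + c^2 * z"
  proof (cases "b = 0")
    case True then show ?thesis using nn by simp
  next
    case False
    then have bp: "b > 0" using nn by simp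
    have "b * (2 * b^3 - 3 * a * b * c + c^2 * z) = c*(b^2*a - 2*a^2*c + z*b*c) + 2*(b^2 - a*c)^2"
      by (simp add: algebra_simps power2_eq_square power3_eq_cube)
    also have "\<dots> \<ge> 0" using mult_nonneg_nonneg[OF nn(3) C2] zero_le_power2[of "b^2 - a*c"] by linarith
    finally show ?thesis using pos[OF bp] by blast
  qed
  have i6: "0 \<le> 2 * b^2 * z - 3 * z * a * c + c * b * y"
  proof (cases "a = 0")
    case True then show ?thesis using nn by simp
  next
    case False
    then have ap: "a > 0" using nn by simp
    have "a * (2 * b^2 * z - 3 * z * a * c + c * b * y) = c*(a^2*z - 2*z^2*b + y*a*b) + 2*z*(b^2*a - 2*a^2*c + z*b*c)"
      by (simp add: algebra_simps power2_eq_square power3_eq_cube)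
    also have "\<dots> \<ge> 0" using mult_nonneg_nonneg[OF nn(3) C2m] mult_nonneg_nonneg[OF nn(5) C2] by linarith
    finally show ?thesis using ap by (simp add: zero_le_mult_iff)
  qed
  show ?thesis using C1 i2 i3 i4 i5 i6 by simp
qed

lemma bsum_rec:
  assumes "0 \<le> p" "p \<le> 1"
  shows "pmf (bernoulli_sum_pmf (p # ps)) k =
     (1 - p) * pmf (bernoulli_sum_pmf ps) k + p * pmf (bernoulli_sum_pmf ps) (k - 1)"
proof -
  have e: "bernoulli_sum_pmf (p # ps) = bind_pmf (bernoulli_pmf p)
      (\<lambda>b. map_pmf (\<lambda>s. (if b then 1 else 0) + s) (bernoulli_sum_pmf ps))"
    by (simp add: pair_pmf_def map_pmf_def bind_assoc_pmf bind_return_pmf)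
  have i: "\<And>c::int. pmf (map_pmf (\<lambda>s. c + s) M) k = pmf M (k - c)" for M
  proof -
    fix c :: int
    have "pmf (map_pmf (\<lambda>s. c + s) M) (c + (k - c)) = pmf M (k - c)"
      by (rule pmf_map_inj') (auto simp: inj_def)
    thus "pmf (map_pmf (\<lambda>s. c + s) M) k = pmf M (k - c)" by simp
  qed
  show ?thesis using assms unfolding e pmf_bind
    by (simp add: i)
qed

lemma main_inv:
  assumes "\<forall>p\<in>set ps. 0 \<le> p \<and> p \<le> 1"
  shows "\<exists>s n. Inv (pmf (bernoulli_sum_pmf ps)) s n \<and>
           Inv (\<lambda>j. pmf (bernoulli_sum_pmf ps) (-j)) (-(s + int n)) n"
  using assms
proof (induction ps)
  case Nil
  have "Inv (\<lambda>j. pmf (return_pmf (0::int)) j) 0 0"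
    unfolding Inv_def rat_def by (auto simp: pmf_return indicator_def)
  moreover have "Inv (\<lambda>j. pmf (return_pmf (0::int)) (-j)) 0 0"
    unfolding Inv_def rat_def by (auto simp: pmf_return indicator_def)
  ultimately show ?case by (intro exI[of _ 0]) auto
next
  case (Cons p ps)
  then have p: "0 \<le> p" "p \<le> 1" and ps: "\<forall>p\<in>set ps. 0 \<le> p \<and> p \<le> 1" by auto
  from Cons.IH[OF ps] obtain s n where
    I: "Inv (pmf (bernoulli_sum_pmf ps)) s n" and
    IR: "Inv (\<lambda>j. pmf (bernoulli_sum_pmf ps) (-j)) (-(s + int n)) n" by blast
  define g where "g = pmf (bernoulli_sum_pmf ps)"
  have rec: "pmf (bernoulli_sum_pmf (p # ps)) = (\<lambda>j. (1 - p) * g j + p * g (j - 1))"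
    using bsum_rec[OF p] unfolding g_def by auto
  have I': "Inv g s n" and IR': "Inv (\<lambda>j. g (-j)) (-(s + int n)) n" using I IR unfolding g_def by auto
  have IRs: "Inv (\<lambda>j. g (-(j + 1))) (-(s + int n) - 1) n"
    using Inv_shift[OF IR', of 1] by simp
  consider "p = 0" | "p = 1" | "0 < p \<and> p < 1" using p by linarith
  then show ?case
  proof cases
    case 1
    then have "pmf (bernoulli_sum_pmf (p # ps)) = g" unfolding rec by simp
    then show ?thesis using I' IR' by auto
  next
    case 2
    then have e: "pmf (bernoulli_sum_pmf (p # ps)) = (\<lambda>j. g (j + -1))" unfolding rec by simp
    have A: "Inv (\<lambda>j. g (j + -1)) (s + 1) n" using Inv_shift[OF I', of "-1"] by simp
    have fe: "(\<lambda>j. g (- j + -1)) = (\<lambda>j. g (-(j + 1)))" by (rule ext) (simp add: algebra_simps)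
    have se: "-((s + 1) + int n) = -(s + int n) - 1" by simp
    have B: "Inv (\<lambda>j. g (- j + -1)) (-((s + 1) + int n)) n"
      by (subst fe, subst se, rule IRs)
    show ?thesis unfolding e using A B by (intro exI[of _ "s+1"] exI[of _ n]) auto
  next
    case 3
    define x where "x = p / (1 - p)"
    have x: "x > 0" using 3 unfolding x_def by simp
    have e: "pmf (bernoulli_sum_pmf (p # ps)) = (\<lambda>j. (1 - p) * (g j + x * g (j - 1)))"
      unfolding rec x_def using 3 by (auto simp: field_simps)
    have A: "Inv (\<lambda>j. (1 - p) * (g j + x * g (j - 1))) s (Suc n)"
      using Inv_scale[OF Inv_step[OF I' x], of "1 - p"] 3 by simp
    have B0: "Inv (\<lambda>j. p * (g (-(j + 1)) + (1/x) * g (-(j - 1 + 1)))) (-(s + int n) - 1) (Suc n)"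
      using Inv_scale[OF Inv_step[OF IRs, of "1/x"], of p] 3 x by simp
    have eq: "(\<lambda>j. p * (g (-(j + 1)) + (1/x) * g (-(j - 1 + 1)))) = (\<lambda>j. (1 - p) * (g (-j) + x * g (-j - 1)))"
      using 3 unfolding x_def by (auto simp: field_simps)
    have B: "Inv (\<lambda>j. (1 - p) * (g (-j) + x * g (-j - 1))) (-(s + int (Suc n))) (Suc n)"
    proof -
      have se2: "-(s + int (Suc n)) = -(s + int n) - 1" by simp
      show ?thesis using B0 unfolding eq se2 .
    qed
    show ?thesis unfolding e using A B by (intro exI[of _ s] exI[of _ "Suc n"]) auto
  qed
qed

theorem corollaryA3:
  fixes ps :: "real list" and g :: "int \<Rightarrow> real" and k :: int
  assumes "length ps \<ge> 1"
    and "\<forall>p\<in>set ps. 0 \<le> p \<and> p \<le> 1"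
    and "g = pmf (bernoulli_sum_pmf ps)"
  shows "((g k)^2 * g (k+1) - 2 * (g (k+1))^2 * g (k-1) + g (k+2) * g k * g (k-1) \<ge> 0) \<and>
    ((g k)^3 - g (k-1) * g k * g (k+1) - (g (k-1))^2 * g (k+2) + g (k-2) * g k * g (k+2) \<ge> 0) \<and>
    ((g k)^3 - g (k-1) * g k * g (k+1) - (g (k+1))^2 * g (k-2) + g (k-2) * g k * g (k+2) \<ge> 0) \<and>
    (2 * (g k)^3 - 3 * g (k-1) * g k * g (k+1) + (g (k-1))^2 * g (k+2) \<ge> 0) \<and>
    (2 * (g k)^3 - 3 * g (k-1) * g k * g (k+1) + (g (k+1))^2 * g (k-2) \<ge> 0) \<and>
    (2 * (g k)^2 * g (k-2) - 3 * g (k-2) * g (k-1) * g (k+1) + g (k+1) * g k * g (k-3) \<ge> 0)"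
proof -
  obtain s n where I: "Inv g s n" and IR: "Inv (\<lambda>j. g (-j)) (-(s + int n)) n"
    using main_inv[OF assms(2)] assms(3) by blast
  have g0: "\<And>j. 0 \<le> g j" and gp: "\<And>j. 0 < g j \<longleftrightarrow> s \<le> j \<and> j \<le> s + int n"
    using I unfolding Inv_def by auto
  have gz: "\<And>j. \<not> (s \<le> j \<and> j \<le> s + int n) \<Longrightarrow> g j = 0"
  proof -
    fix j assume "\<not> (s \<le> j \<and> j \<le> s + int n)"
    then have "\<not> 0 < g j" using gp by blast
    then show "g j = 0" using g0[of j] by linarith
  qed
  have C1: "0 \<le> (g k)^2 * g (k+1) - 2 * (g (k+1))^2 * g (k-1) + g (k+2) * g k * g (k-1)"
    using C1_of_Inv[OF I] .
  have C2: "0 \<le> (g k)^2 * g (k-1) - 2 * (g (k-1))^2 * g (k+1) + g (k-2) * g k * g (k+1)"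
    using C1_of_Inv[OF IR, of "-k"] by (simp add: algebra_simps)
  have C2m: "0 \<le> (g (k-1))^2 * g (k-2) - 2 * (g (k-2))^2 * g k + g (k-3) * g (k-1) * g k"
    using C1_of_Inv[OF IR, of "1-k"] by (simp add: algebra_simps)
  have LC0: "g (k-1) * g (k+1) \<le> (g k)^2" using LC_of_Inv[OF I] .
  have LCm: "g (k-2) * g k \<le> (g (k-1))^2" using LC_of_Inv[OF I, of "k-1"] by (simp add: algebra_simps)
  have LCp: "g k * g (k+2) \<le> (g (k+1))^2" using LC_of_Inv[OF I, of "k+1"] by (simp add: algebra_simps)
  have zr: "g (k-1) * g (k+2) = 0 \<and> g (k+1) * g (k-2) = 0" if "g k = 0"
  proof -
    have "\<not> (s \<le> k \<and> k \<le> s + int n)" using that gp[of k] by auto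
    then consider "k < s" | "k > s + int n" by linarith
    then show ?thesis
    proof cases
      case 1 then show ?thesis using gz[of "k-1"] gz[of "k-2"] by auto
    next
      case 2 then show ?thesis using gz[of "k+1"] gz[of "k+2"] by auto
    qed
  qed
  show ?thesis
    using six[of "g (k-1)" "g k" "g (k+1)" "g (k+2)" "g (k-2)" "g (k-3)", OF g0 g0 g0 g0 g0 g0 C1 _ _ LC0]
      C2 C2m LCm LCp zr
    by (simp add: ac_simps)
qed
end
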